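(* Let $n>0$ and $J\subseteq S$. The restriction of the weak order $\leq_S$ to the set $\mathfrak{S}_n^J(231)$ is a lattice, denoted $\mathcal{T}_n^J$. Although $\mathcal{T}_n^J$ is in general not a sublattice of $\mathrm{Weak}(\mathfrak{S}_n^J)$, it is a lattice quotient of $\mathrm{Weak}(\mathfrak{S}_n^J)$, i.e. there is a lattice congruence $\Theta$ on $\mathrm{Weak}(\mathfrak{S}_n^J)$ such that the quotient lattice $\mathrm{Weak}(\mathfrak{S}_n^J)/\Theta$ is isomorphic to $\mathcal{T}_n^J$.
   Context: Let $\mathfrak{S}_n$ be the symmetric group on $[n]=\{1,\dots,n\}$, $s_i=(i,i+1)$ for $i\in[n-1]$, and $S=\{s_1,\dots,s_{n-1}\}$. Write permutations in one-line notation $w=w_1w_2\cdots w_n$ with $w_i=w(i)$. The inversion set is $\mathrm{inv}(w)=\{(i,j):1\le i<j\le n,\ w_i>w_j\}$ and the (left) weak order is $u\le_S v$ iff $\mathrm{inv}(u)\subseteq\mathrm{inv}(v)$. For $J\subseteq S$, the parabolic quotient is $\mathfrak{S}_n^J=\{w\in\mathfrak{S}_n : w<_S ws\text{ for all }s\in J\}$ (concretely: $w_i<w_{i+1}$ whenever $s_i\in J$); $\mathrm{Weak}(\mathfrak{S}_n^J)$ is $\mathfrak{S}_n^J$ with the restricted order, which is a lattice (it is the weak order interval $[e,w_\circ^J]$). Writing $J=S\setminus\{s_{j_1},\dots,s_{j_r}\}$ with $j_1<\dots<j_r$, the $J$-regions are the blocks $\{1,\dots,j_1\},\{j_1+1,\dots,j_2\},\dots,\{j_r+1,\dots,n\}$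 of $[n]$. An element $w\in\mathfrak{S}_n^J$ contains a $(J,231)$-pattern if there are indices $i<j<k$, lying in three pairwise different $J$-regions, with $w_k<w_i<w_j$ and $w_i=w_k+1$; otherwise $w$ is $(J,231)$-avoiding, and $\mathfrak{S}_n^J(231)$ denotes the set of $(J,231)$-avoiding elements of $\mathfrak{S}_n^J$. A lattice congruence on a lattice $L$ is an equivalence relation $\Theta$ such that $x\,\Theta\, y$ implies $(x\wedge z)\,\Theta\,(y\wedge z)$ and $(x\vee z)\,\Theta\,(y\vee z)$ for all $z$; the quotient $L/\Theta$ carries the induced lattice operations. *)

theory Defs
  imports Main "HOL-Combinatorics.Permutations"
begin

text \<open>Permutations of [n] are functions nat => nat that permute {1..n}.
  The simple reflection s_i is identified with the index i, so J is a subset of {1..<n}.\<close>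

definition perms :: "nat \<Rightarrow> (nat \<Rightarrow> nat) set" where
  "perms n = {w. w permutes {1..n}}"

definition inv_set :: "nat \<Rightarrow> (nat \<Rightarrow> nat) \<Rightarrow> (nat \<times> nat) set" where
  "inv_set n w = {(i, j). 1 \<le> i \<and> i < j \<and> j \<le> n \<and> w i > w j}"

definition weak_le :: "nat \<Rightarrow> (nat \<Rightarrow> nat) \<Rightarrow> (nat \<Rightarrow> nat) \<Rightarrow> bool" where
  "weak_le n u v \<longleftrightarrow> inv_set n u \<subseteq> inv_set n v"

definition parabolic :: "nat \<Rightarrow> nat set \<Rightarrow> (nat \<Rightarrow> nat) set" where
  "parabolic n J = {w \<in> perms n. \<forall>i\<in>J. w i < w (Suc i)}"

text \<open>Positions i and j lie in the same J-region iff no s_k with min i j <= k < max i j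
  is missing from J (the J-regions are the maximal blocks cut at the s_k not in J).\<close>
definition same_J_region :: "nat set \<Rightarrow> nat \<Rightarrow> nat \<Rightarrow> bool" where
  "same_J_region J i j \<longleftrightarrow> (\<forall>k. min i j \<le> k \<and> k < max i j \<longrightarrow> k \<in> J)"

definition has_J231 :: "nat \<Rightarrow> nat set \<Rightarrow> (nat \<Rightarrow> nat) \<Rightarrow> bool" where
  "has_J231 n J w \<longleftrightarrow> (\<exists>i j k. 1 \<le> i \<and> i < j \<and> j < k \<and> k \<le> n
      \<and> \<not> same_J_region J i j \<and> \<not> same_J_region J j k \<and> \<not> same_J_region J i k
      \<and> w k < w i \<and> w i < w j \<and> w i = w k + 1)"

definition avoid231 :: "nat \<Rightarrow> nat set \<Rightarrow> (nat \<Rightarrow> nat) set" where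
  "avoid231 n J = {w \<in> parabolic n J. \<not> has_J231 n J w}"

definition is_join :: "'a set \<Rightarrow> ('a \<Rightarrow> 'a \<Rightarrow> bool) \<Rightarrow> 'a \<Rightarrow> 'a \<Rightarrow> 'a \<Rightarrow> bool" where
  "is_join A le x y z \<longleftrightarrow> z \<in> A \<and> le x z \<and> le y z \<and> (\<forall>u\<in>A. le x u \<and> le y u \<longrightarrow> le z u)"

definition is_meet :: "'a set \<Rightarrow> ('a \<Rightarrow> 'a \<Rightarrow> bool) \<Rightarrow> 'a \<Rightarrow> 'a \<Rightarrow> 'a \<Rightarrow> bool" where
  "is_meet A le x y z \<longleftrightarrow> z \<in> A \<and> le z x \<and> le z y \<and> (\<forall>u\<in>A. le u x \<and> le u y \<longrightarrow> le u z)"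

definition is_lattice_on :: "'a set \<Rightarrow> ('a \<Rightarrow> 'a \<Rightarrow> bool) \<Rightarrow> bool" where
  "is_lattice_on A le \<longleftrightarrow>
     (\<forall>x\<in>A. le x x) \<and>
     (\<forall>x\<in>A. \<forall>y\<in>A. le x y \<and> le y x \<longrightarrow> x = y) \<and>
     (\<forall>x\<in>A. \<forall>y\<in>A. \<forall>z\<in>A. le x y \<and> le y z \<longrightarrow> le x z) \<and>
     (\<forall>x\<in>A. \<forall>y\<in>A. (\<exists>z. is_join A le x y z) \<and> (\<exists>z. is_meet A le x y z))"

definition join_on :: "'a set \<Rightarrow> ('a \<Rightarrow> 'a \<Rightarrow> bool) \<Rightarrow> 'a \<Rightarrow> 'a \<Rightarrow> 'a" where
  "join_on A le x y = (THE z. is_join A le x y z)"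

definition meet_on :: "'a set \<Rightarrow> ('a \<Rightarrow> 'a \<Rightarrow> bool) \<Rightarrow> 'a \<Rightarrow> 'a \<Rightarrow> 'a" where
  "meet_on A le x y = (THE z. is_meet A le x y z)"

definition lattice_congruence :: "'a set \<Rightarrow> ('a \<Rightarrow> 'a \<Rightarrow> bool) \<Rightarrow> ('a \<times> 'a) set \<Rightarrow> bool" where
  "lattice_congruence A le \<Theta> \<longleftrightarrow> equiv A \<Theta> \<and>
     (\<forall>x\<in>A. \<forall>y\<in>A. \<forall>z\<in>A. (x, y) \<in> \<Theta> \<longrightarrow>
        (meet_on A le x z, meet_on A le y z) \<in> \<Theta> \<and> (join_on A le x z, join_on A le y z) \<in> \<Theta>)"

text \<open>The quotient lattice A//Theta has the induced operations [x] v [y] = [x v y],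
  [x] ^ [y] = [x ^ y]; it is isomorphic to the lattice (B, leB) iff there is a
  bijection A//Theta -> B carrying the induced operations to the joins/meets of B.\<close>
definition quotient_iso :: "'a set \<Rightarrow> ('a \<Rightarrow> 'a \<Rightarrow> bool) \<Rightarrow> ('a \<times> 'a) set
    \<Rightarrow> 'b set \<Rightarrow> ('b \<Rightarrow> 'b \<Rightarrow> bool) \<Rightarrow> bool" where
  "quotient_iso A le \<Theta> B leB \<longleftrightarrow> (\<exists>f. bij_betw f (A // \<Theta>) B \<and>
     (\<forall>x\<in>A. \<forall>y\<in>A.
        f (\<Theta> `` {join_on A le x y}) = join_on B leB (f (\<Theta> `` {x})) (f (\<Theta> `` {y})) \<and>
        f (\<Theta> `` {meet_on A le x y}) = meet_on B leB (f (\<Theta> `` {x})) (f (\<Theta> `` {y}))))"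

end

theory Submission
  imports Defs
begin


locale qctx =
  fixes A :: "'a set" and le :: "'a \<Rightarrow> 'a \<Rightarrow> bool" and p :: "'a \<Rightarrow> 'a"
  assumes lat: "is_lattice_on A le"
  and pA: "\<And>x. x \<in> A \<Longrightarrow> p x \<in> A"
  and pdown: "\<And>x. x \<in> A \<Longrightarrow> le (p x) x"
  and pmono: "\<And>x y. x \<in> A \<Longrightarrow> y \<in> A \<Longrightarrow> le x y \<Longrightarrow> le (p x) (p y)"
  and pidem: "\<And>x. x \<in> A \<Longrightarrow> p (p x) = p x"
  and pjoin: "\<And>x z. x \<in> A \<Longrightarrow> z \<in> A \<Longrightarrow> le (p (join_on A le x z)) (join_on A le (p x) z)"
begin

lemma refl: "x \<in> A \<Longrightarrow> le x x" using lat unfolding is_lattice_on_def by blast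
lemma antisym: "x \<in> A \<Longrightarrow> y \<in> A \<Longrightarrow> le x y \<Longrightarrow> le y x \<Longrightarrow> x = y"
  using lat unfolding is_lattice_on_def by blast
lemma trans: "x \<in> A \<Longrightarrow> y \<in> A \<Longrightarrow> z \<in> A \<Longrightarrow> le x y \<Longrightarrow> le y z \<Longrightarrow> le x z"
  using lat unfolding is_lattice_on_def by blast

lemma join_ok: assumes "x \<in> A" "y \<in> A" shows "is_join A le x y (join_on A le x y)"
proof -
  obtain z where z: "is_join A le x y z" using lat assms unfolding is_lattice_on_def by blast
  have "join_on A le x y = z" unfolding join_on_def
  proof (rule the_equality)
    show "is_join A le x y z" by fact
    fix z' assume "is_join A le x y z'"
    with z show "z' = z" unfolding is_join_def by (blast intro: antisym)
  qed
  with z show ?thesis by simp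
qed

lemma meet_ok: assumes "x \<in> A" "y \<in> A" shows "is_meet A le x y (meet_on A le x y)"
proof -
  obtain z where z: "is_meet A le x y z" using lat assms unfolding is_lattice_on_def by blast
  have "meet_on A le x y = z" unfolding meet_on_def
  proof (rule the_equality)
    show "is_meet A le x y z" by fact
    fix z' assume "is_meet A le x y z'"
    with z show "z' = z" unfolding is_meet_def by (blast intro: antisym)
  qed
  with z show ?thesis by simp
qed

abbreviation "jn x y \<equiv> join_on A le x y"
abbreviation "mt x y \<equiv> meet_on A le x y"

lemma jn_A: "x \<in> A \<Longrightarrow> y \<in> A \<Longrightarrow> jn x y \<in> A" using join_ok[of x y] unfolding is_join_def by blast
lemma jn_ub1: "x \<in> A \<Longrightarrow> y \<in> A \<Longrightarrow> le x (jn x y)" using join_ok[of x y] unfolding is_join_def by blast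
lemma jn_ub2: "x \<in> A \<Longrightarrow> y \<in> A \<Longrightarrow> le y (jn x y)" using join_ok[of x y] unfolding is_join_def by blast
lemma jn_least: "x \<in> A \<Longrightarrow> y \<in> A \<Longrightarrow> u \<in> A \<Longrightarrow> le x u \<Longrightarrow> le y u \<Longrightarrow> le (jn x y) u"
  using join_ok[of x y] unfolding is_join_def by blast
lemma mt_A: "x \<in> A \<Longrightarrow> y \<in> A \<Longrightarrow> mt x y \<in> A" using meet_ok[of x y] unfolding is_meet_def by blast
lemma mt_lb1: "x \<in> A \<Longrightarrow> y \<in> A \<Longrightarrow> le (mt x y) x" using meet_ok[of x y] unfolding is_meet_def by blast
lemma mt_lb2: "x \<in> A \<Longrightarrow> y \<in> A \<Longrightarrow> le (mt x y) y" using meet_ok[of x y] unfolding is_meet_def by blast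
lemma mt_greatest: "x \<in> A \<Longrightarrow> y \<in> A \<Longrightarrow> u \<in> A \<Longrightarrow> le u x \<Longrightarrow> le u y \<Longrightarrow> le u (mt x y)"
  using meet_ok[of x y] unfolding is_meet_def by blast

lemma jn_comm: "x \<in> A \<Longrightarrow> y \<in> A \<Longrightarrow> jn x y = jn y x"
  by (rule antisym) (simp_all add: jn_A jn_least jn_ub1 jn_ub2)
lemma mt_comm: "x \<in> A \<Longrightarrow> y \<in> A \<Longrightarrow> mt x y = mt y x"
  by (rule antisym) (simp_all add: mt_A mt_greatest mt_lb1 mt_lb2)

lemma p_le: "x \<in> A \<Longrightarrow> y \<in> A \<Longrightarrow> le (p x) y \<Longrightarrow> le (p x) (p y)"
  by (metis pA pidem pmono)

lemma p_jn: assumes "x \<in> A" "z \<in> A" shows "p (jn x z) = p (jn (p x) z)"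
proof -
  have A1: "jn x z \<in> A" "jn (p x) z \<in> A" "p x \<in> A" using assms by (auto intro!: pA jn_A)
  have "le (p (jn x z)) (jn (p x) z)" using pjoin[OF assms] .
  then have l1: "le (p (jn x z)) (p (jn (p x) z))" using p_le[OF A1(1) A1(2)] by simp
  have "le (p x) (jn x z)" using trans[OF A1(3) assms(1) A1(1) pdown[OF assms(1)] jn_ub1[OF assms]] .
  then have "le (jn (p x) z) (jn x z)" using jn_least[OF A1(3) assms(2) A1(1)] jn_ub2[OF assms] by simp
  then have l2: "le (p (jn (p x) z)) (p (jn x z))" using pmono[OF A1(2) A1(1)] by simp
  show ?thesis using antisym[OF pA pA, OF A1(1) A1(2) l1 l2] .
qed

lemma p_mt: assumes "x \<in> A" "z \<in> A" shows "p (mt x z) = p (mt (p x) z)"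
proof -
  have A1: "mt x z \<in> A" "mt (p x) z \<in> A" "p x \<in> A" using assms by (auto intro!: pA mt_A)
  have "le (mt (p x) z) (p x)" using mt_lb1[OF A1(3) assms(2)] .
  then have "le (mt (p x) z) x" using trans[OF A1(2) A1(3) assms(1)] pdown[OF assms(1)] by simp
  then have "le (mt (p x) z) (mt x z)" using mt_greatest[OF assms A1(2)] mt_lb2[OF A1(3) assms(2)] by simp
  then have l2: "le (p (mt (p x) z)) (p (mt x z))" using pmono[OF A1(2) A1(1)] by simp
  have a: "le (p (mt x z)) (p x)" using pmono[OF A1(1) assms(1)] mt_lb1[OF assms] by simp
  have "le (p (mt x z)) (mt x z)" using pdown[OF A1(1)] .
  then have b: "le (p (mt x z)) z" using trans[OF pA[OF A1(1)] A1(1) assms(2)] mt_lb2[OF assms] by simp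
  have "le (p (mt x z)) (mt (p x) z)" using mt_greatest[OF A1(3) assms(2) pA[OF A1(1)]] a b by simp
  then have l1: "le (p (mt x z)) (p (mt (p x) z))" using p_le[OF A1(1) A1(2)] by simp
  show ?thesis using antisym[OF pA pA, OF A1(1) A1(2) l1 l2] .
qed

definition "Th = {(x, y). x \<in> A \<and> y \<in> A \<and> p x = p y}"
definition "B = {x \<in> A. p x = x}"

lemma B_p: "x \<in> A \<Longrightarrow> p x \<in> B" by (simp add: B_def pA pidem)

lemma p_jn2: assumes "x \<in> A" "y \<in> A" shows "p (jn x y) = p (jn (p x) (p y))"
proof -
  have "p (jn x y) = p (jn (p x) y)" using p_jn[OF assms] .
  also have "\<dots> = p (jn y (p x))" using jn_comm[OF pA[OF assms(1)] assms(2)] by simp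
  also have "\<dots> = p (jn (p y) (p x))" using p_jn[OF assms(2) pA[OF assms(1)]] .
  also have "\<dots> = p (jn (p x) (p y))" using jn_comm[OF pA[OF assms(2)] pA[OF assms(1)]] by simp
  finally show ?thesis .
qed

lemma p_mt2: assumes "x \<in> A" "y \<in> A" shows "p (mt x y) = p (mt (p x) (p y))"
proof -
  have "p (mt x y) = p (mt (p x) y)" using p_mt[OF assms] .
  also have "\<dots> = p (mt y (p x))" using mt_comm[OF pA[OF assms(1)] assms(2)] by simp
  also have "\<dots> = p (mt (p y) (p x))" using p_mt[OF assms(2) pA[OF assms(1)]] .
  also have "\<dots> = p (mt (p x) (p y))" using mt_comm[OF pA[OF assms(2)] pA[OF assms(1)]] by simp
  finally show ?thesis .
qed

lemma jn_B: assumes "x \<in> A" "y \<in> A" shows "is_join B le (p x) (p y) (p (jn x y))"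
  unfolding is_join_def
proof (intro conjI ballI impI)
  have A1: "p x \<in> A" "p y \<in> A" "jn x y \<in> A" using assms by (auto intro: pA jn_A)
  show "p (jn x y) \<in> B" using B_p[OF A1(3)] .
  show "le (p x) (p (jn x y))" using pmono[OF assms(1) A1(3) jn_ub1[OF assms]] .
  show "le (p y) (p (jn x y))" using pmono[OF assms(2) A1(3) jn_ub2[OF assms]] .
  fix u assume u: "u \<in> B" "le (p x) u \<and> le (p y) u"
  have uA: "u \<in> A" "p u = u" using u(1) B_def by auto
  have "le (jn (p x) (p y)) u" using u(2) jn_least[OF A1(1) A1(2) uA(1)] by simp
  then have "le (p (jn (p x) (p y))) (p u)" using pmono[OF jn_A[OF A1(1) A1(2)] uA(1)] by simp
  then show "le (p (jn x y)) u" using p_jn2[OF assms] uA(2) by simp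
qed

lemma mt_B: assumes "x \<in> A" "y \<in> A" shows "is_meet B le (p x) (p y) (p (mt x y))"
  unfolding is_meet_def
proof (intro conjI ballI impI)
  have A1: "p x \<in> A" "p y \<in> A" "mt x y \<in> A" using assms by (auto intro: pA mt_A)
  show "p (mt x y) \<in> B" using B_p[OF A1(3)] .
  show "le (p (mt x y)) (p x)" using pmono[OF A1(3) assms(1) mt_lb1[OF assms]] .
  show "le (p (mt x y)) (p y)" using pmono[OF A1(3) assms(2) mt_lb2[OF assms]] .
  fix u assume u: "u \<in> B" "le u (p x) \<and> le u (p y)"
  have uA: "u \<in> A" "p u = u" using u(1) B_def by auto
  have "le u (mt (p x) (p y))" using u(2) mt_greatest[OF A1(1) A1(2) uA(1)] by simp
  then have "le (p u) (p (mt (p x) (p y)))" using pmono[OF uA(1) mt_A[OF A1(1) A1(2)]] by simp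
  then show "le u (p (mt x y))" using p_mt2[OF assms] uA(2) by simp
qed

lemma B_lattice: "is_lattice_on B le"
  unfolding is_lattice_on_def
proof (intro conjI ballI impI)
  have BA: "B \<subseteq> A" by (auto simp: B_def)
  fix x y z assume xyz: "x \<in> B" "y \<in> B" "z \<in> B"
  then have xyzA: "x \<in> A" "y \<in> A" "z \<in> A" and px: "p x = x" "p y = y" using BA B_def by auto
  show "le x x" using refl[OF xyzA(1)] .
  show "le x y \<and> le y x \<Longrightarrow> x = y" using antisym[OF xyzA(1,2)] by blast
  show "le x y \<and> le y z \<Longrightarrow> le x z" using trans[OF xyzA] by blast
  show "\<exists>z. is_join B le x y z" using jn_B[OF xyzA(1,2)] px by auto
  show "\<exists>z. is_meet B le x y z" using mt_B[OF xyzA(1,2)] px by auto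
qed

lemma Th_equiv: "equiv A Th"
  unfolding equiv_def refl_on_def sym_def trans_def Th_def by auto

lemma Th_cong: "lattice_congruence A le Th"
  unfolding lattice_congruence_def
proof (intro conjI ballI impI Th_equiv)
  fix x y z assume xyz: "x \<in> A" "y \<in> A" "z \<in> A" and "(x, y) \<in> Th"
  then have pxy: "p x = p y" by (simp add: Th_def)
  have "p (mt x z) = p (mt (p x) z)" using p_mt[OF xyz(1,3)] .
  also have "\<dots> = p (mt y z)" using p_mt[OF xyz(2,3)] pxy by simp
  finally show "(mt x z, mt y z) \<in> Th" using xyz by (simp add: Th_def mt_A)
  have "p (jn x z) = p (jn (p x) z)" using p_jn[OF xyz(1,3)] .
  also have "\<dots> = p (jn y z)" using p_jn[OF xyz(2,3)] pxy by simp
  finally show "(jn x z, jn y z) \<in> Th" using xyz by (simp add: Th_def jn_A)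
qed

definition "fq C = p (SOME x. x \<in> C)"

lemma cls: "x \<in> A \<Longrightarrow> Th `` {x} = {y \<in> A. p y = p x}"
  by (auto simp: Th_def)

lemma fq_cls: assumes "x \<in> A" shows "fq (Th `` {x}) = p x"
proof -
  have "x \<in> Th `` {x}" using assms by (simp add: Th_def)
  then have "(SOME y. y \<in> Th `` {x}) \<in> Th `` {x}" by (rule someI)
  then show ?thesis unfolding fq_def using cls[OF assms] by simp
qed

lemma join_eq: "is_join B le x y z \<Longrightarrow> join_on B le x y = z"
  unfolding join_on_def
proof (rule the_equality)
  assume z: "is_join B le x y z"
  show "is_join B le x y z" by fact
  fix z' assume "is_join B le x y z'"
  with z show "z' = z" unfolding is_join_def B_def by (blast intro: antisym)
qed

lemma meet_eq: "is_meet B le x y z \<Longrightarrow> meet_on B le x y = z"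
  unfolding meet_on_def
proof (rule the_equality)
  assume z: "is_meet B le x y z"
  show "is_meet B le x y z" by fact
  fix z' assume "is_meet B le x y z'"
  with z show "z' = z" unfolding is_meet_def B_def by (blast intro: antisym)
qed

lemma Th_iso: "quotient_iso A le Th B le"
  unfolding quotient_iso_def
proof (intro exI conjI ballI)
  show "bij_betw fq (A // Th) B"
    unfolding bij_betw_def
  proof
    show "inj_on fq (A // Th)"
    proof (rule inj_onI)
      fix C D assume "C \<in> A // Th" "D \<in> A // Th" "fq C = fq D"
      then obtain x y where xy: "x \<in> A" "y \<in> A" "C = Th `` {x}" "D = Th `` {y}" "fq C = fq D"
        by (auto elim!: quotientE)
      then have "p x = p y" using fq_cls by simp
      then show "C = D" using xy cls by simp
    qed
    show "fq ` (A // Th) = B"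
    proof
      show "fq ` (A // Th) \<subseteq> B" by (auto elim!: quotientE simp: fq_cls B_p)
      show "B \<subseteq> fq ` (A // Th)"
      proof
        fix b assume "b \<in> B"
        then have b: "b \<in> A" "p b = b" by (auto simp: B_def)
        then have "fq (Th `` {b}) = b" using fq_cls by simp
        moreover have "Th `` {b} \<in> A // Th" using b(1) by (rule quotientI)
        ultimately show "b \<in> fq ` (A // Th)" by force
      qed
    qed
  qed
  fix x y assume xy: "x \<in> A" "y \<in> A"
  show "fq (Th `` {jn x y}) = join_on B le (fq (Th `` {x})) (fq (Th `` {y}))"
    using fq_cls xy jn_A join_eq[OF jn_B[OF xy]] by simp
  show "fq (Th `` {mt x y}) = meet_on B le (fq (Th `` {x})) (fq (Th `` {y}))"
    using fq_cls xy mt_A meet_eq[OF mt_B[OF xy]] by simp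
qed

lemma main: "is_lattice_on {x \<in> A. p x = x} le \<and> (\<exists>T. lattice_congruence A le T \<and> quotient_iso A le T {x \<in> A. p x = x} le)"
  using B_lattice Th_cong Th_iso unfolding B_def by blast

end


definition up :: "nat \<Rightarrow> (nat \<times> nat) set" where
  "up n = {(i, j). 1 \<le> i \<and> i < j \<and> j \<le> n}"

definition cotr :: "(nat \<times> nat) set \<Rightarrow> bool" where
  "cotr T \<longleftrightarrow> (\<forall>i j k. (i, k) \<in> T \<longrightarrow> i < j \<longrightarrow> j < k \<longrightarrow> (i, j) \<in> T \<or> (j, k) \<in> T)"

definition bicl :: "nat \<Rightarrow> (nat \<times> nat) set \<Rightarrow> bool" where
  "bicl n T \<longleftrightarrow> T \<subseteq> up n \<and> trans T \<and> cotr T"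

lemma trans_up: "trans (up n)" unfolding trans_def up_def by auto

lemma inv_bicl: "bicl n (inv_set n w)"
  unfolding bicl_def up_def inv_set_def cotr_def trans_def by auto

lemma perm_range: "w \<in> perms n \<Longrightarrow> i \<in> {1..n} \<Longrightarrow> w i \<in> {1..n}"
  unfolding perms_def using permutes_in_image[of w "{1..n}" i] by simp

lemma perm_out: "w \<in> perms n \<Longrightarrow> i \<notin> {1..n} \<Longrightarrow> w i = i"
  unfolding perms_def using permutes_not_in[of w "{1..n}" i] by simp

lemma perm_inj: "w \<in> perms n \<Longrightarrow> w i = w j \<Longrightarrow> i = j"
  unfolding perms_def using permutes_inj[of w "{1..n}"] by (simp add: inj_eq)

lemma perm_card:
  assumes w: "w \<in> perms n" and i: "i \<in> {1..n}"
  shows "card {j \<in> {1..n}. w j < w i} = w i - 1"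
proof -
  have wi: "w i \<in> {1..n}" using perm_range[OF w i] .
  have "w ` {j \<in> {1..n}. w j < w i} = {1..<w i}"
  proof
    show "w ` {j \<in> {1..n}. w j < w i} \<subseteq> {1..<w i}"
      using perm_range[OF w] by fastforce
    show "{1..<w i} \<subseteq> w ` {j \<in> {1..n}. w j < w i}"
    proof
      fix m assume m: "m \<in> {1..<w i}"
      then have "m \<in> {1..n}" using wi by auto
      then have "m \<in> w ` {1..n}" using w unfolding perms_def using permutes_image[of w "{1..n}"] by simp
      then obtain j where "j \<in> {1..n}" "w j = m" by blast
      then show "m \<in> w ` {j \<in> {1..n}. w j < w i}" using m by auto
    qed
  qed
  moreover have "inj_on w {j \<in> {1..n}. w j < w i}"
    using w unfolding perms_def by (simp add: permutes_inj_on)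
  ultimately have "card {j \<in> {1..n}. w j < w i} = card {1..<w i}"
    by (metis card_image)
  then show ?thesis by simp
qed

lemma lt_iff_inv:
  assumes w: "w \<in> perms n" and i: "i \<in> {1..n}" and j: "j \<in> {1..n}"
  shows "w j < w i \<longleftrightarrow> ((j < i \<and> (j, i) \<notin> inv_set n w) \<or> (i < j \<and> (i, j) \<in> inv_set n w))"
proof (cases i j rule: linorder_cases)
  case less
  then show ?thesis using i j by (auto simp: inv_set_def)
next
  case equal
  then show ?thesis by auto
next
  case greater
  have "w j \<noteq> w i" using perm_inj[OF w] greater by (metis less_irrefl)
  then show ?thesis using i j greater by (auto simp: inv_set_def)
qed

lemma inv_inj:
  assumes u: "u \<in> perms n" and v: "v \<in> perms n" and e: "inv_set n u = inv_set n v"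
  shows "u = v"
proof
  fix i
  show "u i = v i"
  proof (cases "i \<in> {1..n}")
    case True
    have "{j \<in> {1..n}. u j < u i} = {j \<in> {1..n}. v j < v i}"
      using lt_iff_inv[OF u True] lt_iff_inv[OF v True] e by auto
    then have "u i - 1 = v i - 1" using perm_card[OF u True] perm_card[OF v True] by simp
    moreover have "u i \<ge> 1" "v i \<ge> 1" using perm_range[OF u True] perm_range[OF v True] by auto
    ultimately show ?thesis by simp
  next
    case False
    then show ?thesis using perm_out[OF u] perm_out[OF v] by simp
  qed
qed

definition bef :: "(nat \<times> nat) set \<Rightarrow> nat \<Rightarrow> nat \<Rightarrow> bool" where
  "bef T i j \<longleftrightarrow> (i < j \<and> (i, j) \<notin> T) \<or> (j < i \<and> (j, i) \<in> T)"

lemma bef_trans: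
  assumes t: "trans T" and c: "cotr T" and ab: "bef T a b" and bc: "bef T b c"
  shows "bef T a c"
proof -
  have tr: "\<And>x y z. (x, y) \<in> T \<Longrightarrow> (y, z) \<in> T \<Longrightarrow> (x, z) \<in> T" using t unfolding trans_def by blast
  have co: "\<And>x y z. (x, z) \<in> T \<Longrightarrow> x < y \<Longrightarrow> y < z \<Longrightarrow> (x, y) \<in> T \<or> (y, z) \<in> T"
    using c unfolding cotr_def by blast
  show ?thesis
  proof (cases a b rule: linorder_cases)
    case less
    then have ab': "(a, b) \<notin> T" using ab by (auto simp: bef_def)
    show ?thesis
    proof (cases b c rule: linorder_cases)
      case less
      then have "(b, c) \<notin> T" using bc by (auto simp: bef_def)
      then have "(a, c) \<notin> T" using co[of a c b] ab' \<open>a < b\<close> less by blast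
      then show ?thesis using \<open>a < b\<close> less by (auto simp: bef_def)
    next
      case equal then show ?thesis using bc by (auto simp: bef_def)
    next
      case greater
      then have cb: "(c, b) \<in> T" using bc by (auto simp: bef_def)
      show ?thesis
      proof (cases a c rule: linorder_cases)
        case less
        then have "(a, c) \<notin> T" using tr[of a c b] cb ab' by blast
        then show ?thesis using less by (auto simp: bef_def)
      next
        case equal then show ?thesis using ab' cb by simp
      next
        case greater
        then have "(c, a) \<in> T" using co[of c b a] cb ab' \<open>a < b\<close> by blast
        then show ?thesis using greater by (auto simp: bef_def)
      qed
    qed
  next
    case equal then show ?thesis using ab by (auto simp: bef_def)
  next
    case greater
    then have ba: "(b, a) \<in> T" using ab by (auto simp: bef_def)
    show ?thesis
    proof (cases b c rule: linorder_cases)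
      case less
      then have bc': "(b, c) \<notin> T" using bc by (auto simp: bef_def)
      show ?thesis
      proof (cases a c rule: linorder_cases)
        case less
        then have "(a, c) \<notin> T" using tr[of b a c] ba bc' by blast
        then show ?thesis using less by (auto simp: bef_def)
      next
        case equal then show ?thesis using ba bc' by simp
      next
        case greater
        then have "(c, a) \<in> T" using co[of b a c] ba bc' \<open>b < c\<close> by blast
        then show ?thesis using greater by (auto simp: bef_def)
      qed
    next
      case equal then show ?thesis using bc by (auto simp: bef_def)
    next
      case greater
      then have "(c, b) \<in> T" using bc by (auto simp: bef_def)
      then have "(c, a) \<in> T" using tr ba by blast
      then show ?thesis using \<open>b > c\<close> \<open>b < a\<close> by (auto simp: bef_def)
    qed
  qed
qed

lemma bef_irrefl: "\<not> bef T a a" by (simp add: bef_def)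

lemma bef_total: "a \<noteq> b \<Longrightarrow> bef T a b \<or> bef T b a"
  by (auto simp: bef_def)

lemma bef_asym: "bef T a b \<Longrightarrow> \<not> bef T b a"
  by (auto simp: bef_def)

definition rk :: "nat \<Rightarrow> (nat \<times> nat) set \<Rightarrow> nat \<Rightarrow> nat" where
  "rk n T i = (if i \<in> {1..n} then Suc (card {j \<in> {1..n}. bef T j i}) else i)"

lemma rk_mono:
  assumes b: "bicl n T" and a: "a \<in> {1..n}" and bb: "b \<in> {1..n}" and ab: "bef T a b"
  shows "rk n T a < rk n T b"
proof -
  have t: "trans T" "cotr T" using b by (auto simp: bicl_def)
  have "{j \<in> {1..n}. bef T j a} \<subset> {j \<in> {1..n}. bef T j b}"
  proof
    show "{j \<in> {1..n}. bef T j a} \<subseteq> {j \<in> {1..n}. bef T j b}"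
      using bef_trans[OF t] ab by blast
    show "{j \<in> {1..n}. bef T j a} \<noteq> {j \<in> {1..n}. bef T j b}"
      using a ab bef_irrefl by blast
  qed
  then have "card {j \<in> {1..n}. bef T j a} < card {j \<in> {1..n}. bef T j b}"
    by (rule psubset_card_mono[rotated]) simp
  then show ?thesis using a bb by (simp add: rk_def)
qed

lemma rk_range:
  assumes i: "i \<in> {1..n}" shows "rk n T i \<in> {1..n}"
proof -
  have "{j \<in> {1..n}. bef T j i} \<subseteq> {1..n} - {i}" using bef_irrefl by blast
  then have "card {j \<in> {1..n}. bef T j i} \<le> card ({1..n} - {i})" by (rule card_mono[rotated]) simp
  also have "\<dots> = n - 1" using i by simp
  finally have c: "card {j \<in> {1..n}. bef T j i} \<le> n - 1" .
  have "n \<ge> 1" using i by simp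
  then have "Suc (card {j \<in> {1..n}. bef T j i}) \<le> n" using c by linarith
  then show ?thesis using i by (simp add: rk_def)
qed

lemma rk_perm:
  assumes b: "bicl n T"
  shows "rk n T \<in> perms n \<and> inv_set n (rk n T) = T"
proof
  have inj: "inj_on (rk n T) {1..n}"
  proof (rule inj_onI)
    fix x y assume xy: "x \<in> {1..n}" "y \<in> {1..n}" "rk n T x = rk n T y"
    show "x = y"
    proof (rule ccontr)
      assume "x \<noteq> y"
      then have "bef T x y \<or> bef T y x" by (rule bef_total)
      then show False using rk_mono[OF b xy(1) xy(2)] rk_mono[OF b xy(2) xy(1)] xy(3) by auto
    qed
  qed
  have img: "rk n T ` {1..n} = {1..n}"
  proof (rule endo_inj_surj)
    show "rk n T ` {1..n} \<subseteq> {1..n}" using rk_range by blast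
    show "inj_on (rk n T) {1..n}" by (rule inj)
  qed simp
  have "rk n T permutes {1..n}"
  proof (rule bij_imp_permutes)
    show "bij_betw (rk n T) {1..n} {1..n}" unfolding bij_betw_def using inj img by blast
  qed (auto simp add: rk_def)
  then show "rk n T \<in> perms n" by (simp add: perms_def)
  show "inv_set n (rk n T) = T"
  proof
    show "inv_set n (rk n T) \<subseteq> T"
    proof
      fix x assume "x \<in> inv_set n (rk n T)"
      then obtain i j where ij: "x = (i, j)" "1 \<le> i" "i < j" "j \<le> n" "rk n T i > rk n T j"
        by (auto simp: inv_set_def)
      show "x \<in> T"
      proof (rule ccontr)
        assume "x \<notin> T"
        then have "bef T i j" using ij by (simp add: bef_def)
        then have "rk n T i < rk n T j" using rk_mono[OF b] ij by simp
        then show False using ij by simp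
      qed
    qed
    show "T \<subseteq> inv_set n (rk n T)"
    proof
      fix x assume x: "x \<in> T"
      then obtain i j where ij: "x = (i, j)" "1 \<le> i" "i < j" "j \<le> n"
        using b by (auto simp: bicl_def up_def)
      then have "bef T j i" using x by (simp add: bef_def)
      then have "rk n T j < rk n T i" using rk_mono[OF b] ij by simp
      then show "x \<in> inv_set n (rk n T)" using ij by (simp add: inv_set_def)
    qed
  qed
qed

definition permof :: "nat \<Rightarrow> (nat \<times> nat) set \<Rightarrow> (nat \<Rightarrow> nat)" where
  "permof n T = (SOME w. w \<in> perms n \<and> inv_set n w = T)"

lemma permof:
  assumes "bicl n T" shows "permof n T \<in> perms n" "inv_set n (permof n T) = T"
proof -
  have "\<exists>w. w \<in> perms n \<and> inv_set n w = T" using rk_perm[OF assms] by blast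
  then have "permof n T \<in> perms n \<and> inv_set n (permof n T) = T"
    unfolding permof_def by (rule someI_ex)
  then show "permof n T \<in> perms n" "inv_set n (permof n T) = T" by auto
qed

lemma permof_inv: "w \<in> perms n \<Longrightarrow> permof n (inv_set n w) = w"
  using permof[OF inv_bicl] inv_inj by blast

lemma tc_up: "R \<subseteq> up n \<Longrightarrow> R\<^sup>+ \<subseteq> up n"
proof -
  assume "R \<subseteq> up n"
  then have "R\<^sup>+ \<subseteq> (up n)\<^sup>+" by (rule trancl_mono_subset)
  then show ?thesis using trancl_id[OF trans_up] by simp
qed

lemma tc_cotr:
  assumes R: "R \<subseteq> up n"
  and bs: "\<And>a b c. (a, b) \<in> R \<Longrightarrow> a < c \<Longrightarrow> c < b \<Longrightarrow> (a, c) \<in> R\<^sup>+ \<or> (c, b) \<in> R\<^sup>+"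
  shows "cotr (R\<^sup>+)"
  unfolding cotr_def
proof (intro allI impI)
  fix i j k assume ik: "(i, k) \<in> R\<^sup>+" and ij: "i < j" and jk: "j < k"
  have "\<forall>j. i < j \<longrightarrow> j < k \<longrightarrow> (i, j) \<in> R\<^sup>+ \<or> (j, k) \<in> R\<^sup>+"
    using ik
  proof (induction rule: trancl_induct)
    case (base y)
    then show ?case using bs by blast
  next
    case (step y z)
    have yz: "y < z" using step(2) R by (auto simp: up_def)
    show ?case
    proof (intro allI impI)
      fix j assume j: "i < j" "j < z"
      show "(i, j) \<in> R\<^sup>+ \<or> (j, z) \<in> R\<^sup>+"
      proof (cases j y rule: linorder_cases)
        case less
        then have "(i, j) \<in> R\<^sup>+ \<or> (j, y) \<in> R\<^sup>+" using step(3) j by blast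
        then show ?thesis using step(2) by (meson trancl_into_trancl)
      next
        case equal then show ?thesis using step(1) by simp
      next
        case greater
        then have "(y, j) \<in> R\<^sup>+ \<or> (j, z) \<in> R\<^sup>+" using bs[OF step(2)] j by blast
        then show ?thesis using step(1) by (meson trancl_trans)
      qed
    qed
  qed
  then show "(i, j) \<in> R\<^sup>+ \<or> (j, k) \<in> R\<^sup>+" using ij jk by blast
qed

lemma tc_bicl:
  assumes R: "R \<subseteq> up n"
  and bs: "\<And>a b c. (a, b) \<in> R \<Longrightarrow> a < c \<Longrightarrow> c < b \<Longrightarrow> (a, c) \<in> R\<^sup>+ \<or> (c, b) \<in> R\<^sup>+"
  shows "bicl n (R\<^sup>+)"
  unfolding bicl_def using tc_up[OF R] tc_cotr[OF R bs] by simp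

lemma union_bicl:
  assumes F: "\<And>T. T \<in> F \<Longrightarrow> bicl n T"
  shows "bicl n ((\<Union>F)\<^sup>+)"
proof (rule tc_bicl)
  show "\<Union>F \<subseteq> up n" using F by (auto simp: bicl_def)
  fix a b c assume "(a, b) \<in> \<Union>F" "a < c" "c < b"
  then obtain T where T: "T \<in> F" "(a, b) \<in> T" by blast
  then have "(a, c) \<in> T \<or> (c, b) \<in> T" using F[OF T(1)] \<open>a < c\<close> \<open>c < b\<close>
    unfolding bicl_def cotr_def by blast
  then show "(a, c) \<in> (\<Union>F)\<^sup>+ \<or> (c, b) \<in> (\<Union>F)\<^sup>+" using T by blast
qed


abbreviation same where "same J i j \<equiv> same_J_region J i j"

lemma same_split:
  assumes "i \<le> j" "j \<le> k"
  shows "same J i k \<longleftrightarrow> same J i j \<and> same J j k"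
proof -
  have "same J i k \<longleftrightarrow> (\<forall>m. i \<le> m \<and> m < k \<longrightarrow> m \<in> J)"
    using assms by (simp add: same_J_region_def min_def max_def)
  moreover have "same J i j \<longleftrightarrow> (\<forall>m. i \<le> m \<and> m < j \<longrightarrow> m \<in> J)"
    using assms by (simp add: same_J_region_def min_def max_def)
  moreover have "same J j k \<longleftrightarrow> (\<forall>m. j \<le> m \<and> m < k \<longrightarrow> m \<in> J)"
    using assms by (simp add: same_J_region_def min_def max_def)
  ultimately show ?thesis using assms
    by (metis le_trans linorder_not_le order.strict_trans2)
qed

definition Dif :: "nat set \<Rightarrow> (nat \<times> nat) set" where
  "Dif J = {(i, j). \<not> same J i j}"

lemma chain_lt:
  fixes w :: "nat \<Rightarrow> nat"
  assumes "\<forall>m. i \<le> m \<and> m < j \<longrightarrow> w m < w (Suc m)" "i < j"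
  shows "w i < w j"
  using assms
proof (induction j)
  case 0 then show ?case by simp
next
  case (Suc j)
  show ?case
  proof (cases "i < j")
    case True
    then have "w i < w j" using Suc by simp
    moreover have "w j < w (Suc j)" using Suc.prems True by simp
    ultimately show ?thesis by simp
  next
    case False
    then have "i = j" using Suc.prems by simp
    then show ?thesis using Suc.prems by simp
  qed
qed

lemma par_iff:
  assumes J: "J \<subseteq> {1..<n}"
  shows "w \<in> parabolic n J \<longleftrightarrow> w \<in> perms n \<and> inv_set n w \<subseteq> Dif J"
proof
  assume w: "w \<in> parabolic n J"
  then have wp: "w \<in> perms n" and inc: "\<forall>i\<in>J. w i < w (Suc i)" by (auto simp: parabolic_def)
  have "inv_set n w \<subseteq> Dif J"
  proof
    fix x assume "x \<in> inv_set n w"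
    then obtain i j where ij: "x = (i, j)" "i < j" "w i > w j" by (auto simp: inv_set_def)
    show "x \<in> Dif J"
    proof (rule ccontr)
      assume "x \<notin> Dif J"
      then have "same J i j" using ij by (simp add: Dif_def)
      then have "\<forall>m. i \<le> m \<and> m < j \<longrightarrow> m \<in> J" using ij by (simp add: same_J_region_def)
      then have "w i < w j" using chain_lt[of i j w] inc ij by blast
      then show False using ij by simp
    qed
  qed
  then show "w \<in> perms n \<and> inv_set n w \<subseteq> Dif J" using wp by simp
next
  assume a: "w \<in> perms n \<and> inv_set n w \<subseteq> Dif J"
  have "\<forall>i\<in>J. w i < w (Suc i)"
  proof
    fix i assume i: "i \<in> J"
    then have i1: "1 \<le> i" "Suc i \<le> n" using J by auto
    have "same J i (Suc i)" using i unfolding same_J_region_def by (auto simp: le_less_Suc_eq)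
    then have "(i, Suc i) \<notin> inv_set n w" using a by (auto simp: Dif_def)
    then have "\<not> w i > w (Suc i)" using i1 by (simp add: inv_set_def)
    moreover have "w i \<noteq> w (Suc i)" using perm_inj[of w n i "Suc i"] a by auto
    ultimately show "w i < w (Suc i)" by simp
  qed
  then show "w \<in> parabolic n J" using a by (simp add: parabolic_def)
qed

lemma trans_DU: "trans (Dif J \<inter> up n)"
  unfolding trans_def
proof (intro allI impI)
  fix x y z assume a: "(x, y) \<in> Dif J \<inter> up n" "(y, z) \<in> Dif J \<inter> up n"
  then have "x \<le> y" "y \<le> z" "\<not> same J x y" by (auto simp: Dif_def up_def)
  then have "\<not> same J x z" using same_split by blast
  then show "(x, z) \<in> Dif J \<inter> up n" using a by (auto simp: Dif_def up_def)
qed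

lemma tc_DU: "R \<subseteq> Dif J \<inter> up n \<Longrightarrow> R\<^sup>+ \<subseteq> Dif J \<inter> up n"
proof -
  assume "R \<subseteq> Dif J \<inter> up n"
  then have "R\<^sup>+ \<subseteq> (Dif J \<inter> up n)\<^sup>+" by (rule trancl_mono_subset)
  then show ?thesis using trancl_id[OF trans_DU] by simp
qed

lemma inv_up: "inv_set n w \<subseteq> up n" by (auto simp: inv_set_def up_def)

lemma trans_inv: "trans (inv_set n w)" using inv_bicl unfolding bicl_def by blast

lemma tc_sub_trans: "R \<subseteq> T \<Longrightarrow> trans T \<Longrightarrow> R\<^sup>+ \<subseteq> T"
  by (metis trancl_id trancl_mono_subset)

locale par =
  fixes n :: nat and J :: "nat set"
  assumes J: "J \<subseteq> {1..<n}"
begin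

abbreviation "P \<equiv> parabolic n J"
abbreviation "le \<equiv> weak_le n"
abbreviation "iv \<equiv> inv_set n"

lemma P_perm: "x \<in> P \<Longrightarrow> x \<in> perms n" using par_iff[OF J] by blast
lemma P_D: "x \<in> P \<Longrightarrow> iv x \<subseteq> Dif J" using par_iff[OF J] by blast
lemma P_DU: "x \<in> P \<Longrightarrow> iv x \<subseteq> Dif J \<inter> up n" using P_D inv_up by blast

lemma P_of: assumes "bicl n T" "T \<subseteq> Dif J" shows "permof n T \<in> P" "iv (permof n T) = T"
  using permof[OF assms(1)] par_iff[OF J] assms(2) by auto

definition "jP x y = permof n ((iv x \<union> iv y)\<^sup>+)"

lemma jP: assumes "x \<in> P" "y \<in> P"
  shows "jP x y \<in> P" "iv (jP x y) = (iv x \<union> iv y)\<^sup>+"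
proof -
  have b: "bicl n ((\<Union>{iv x, iv y})\<^sup>+)" by (rule union_bicl) (auto simp: inv_bicl)
  have d: "(iv x \<union> iv y)\<^sup>+ \<subseteq> Dif J" using tc_DU[of "iv x \<union> iv y" J n] P_DU assms by blast
  show "jP x y \<in> P" "iv (jP x y) = (iv x \<union> iv y)\<^sup>+" using P_of[of "(iv x \<union> iv y)\<^sup>+"] b d
    unfolding jP_def by auto
qed

lemma jP_join: assumes "x \<in> P" "y \<in> P" shows "is_join P le x y (jP x y)"
  unfolding is_join_def weak_le_def
  using jP[OF assms] tc_sub_trans[OF _ trans_inv] by (auto simp: trancl_mono_subset)

definition "mP x y = permof n ((\<Union>{iv u | u. u \<in> P \<and> iv u \<subseteq> iv x \<and> iv u \<subseteq> iv y})\<^sup>+)"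

lemma mP_join: assumes "x \<in> P" "y \<in> P" shows "is_meet P le x y (mP x y)"
proof -
  let ?U = "\<Union>{iv u | u. u \<in> P \<and> iv u \<subseteq> iv x \<and> iv u \<subseteq> iv y}"
  have b: "bicl n (?U\<^sup>+)" by (rule union_bicl) (auto simp: inv_bicl)
  have sx: "?U\<^sup>+ \<subseteq> iv x" by (rule tc_sub_trans) (auto simp: trans_inv)
  have sy: "?U\<^sup>+ \<subseteq> iv y" by (rule tc_sub_trans) (auto simp: trans_inv)
  have d: "?U\<^sup>+ \<subseteq> Dif J" using sx P_D[OF assms(1)] by blast
  have m: "mP x y \<in> P" "iv (mP x y) = ?U\<^sup>+" using P_of[OF b d] unfolding mP_def by auto
  show ?thesis unfolding is_meet_def weak_le_def
  proof (intro conjI ballI impI)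
    show "mP x y \<in> P" using m by simp
    show "iv (mP x y) \<subseteq> iv x" using m sx by simp
    show "iv (mP x y) \<subseteq> iv y" using m sy by simp
    fix u assume "u \<in> P" "iv u \<subseteq> iv x \<and> iv u \<subseteq> iv y"
    then have "iv u \<subseteq> ?U" by blast
    then show "iv u \<subseteq> iv (mP x y)" using m by auto
  qed
qed

lemma P_lattice: "is_lattice_on P le"
  unfolding is_lattice_on_def
proof (intro conjI ballI impI)
  fix x y z assume xyz: "x \<in> P" "y \<in> P" "z \<in> P"
  show "le x x" by (simp add: weak_le_def)
  show "le x y \<and> le y x \<Longrightarrow> x = y" using inv_inj P_perm xyz by (auto simp: weak_le_def)
  show "le x y \<and> le y z \<Longrightarrow> le x z" by (auto simp: weak_le_def)
  show "\<exists>z. is_join P le x y z" using jP_join xyz by blast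
  show "\<exists>z. is_meet P le x y z" using mP_join xyz by blast
qed

lemma join_on_P: assumes "x \<in> P" "y \<in> P" shows "join_on P le x y = jP x y"
  unfolding join_on_def
proof (rule the_equality)
  show "is_join P le x y (jP x y)" using jP_join[OF assms] .
  fix z assume "is_join P le x y z"
  then show "z = jP x y" using jP_join[OF assms] inv_inj P_perm
    unfolding is_join_def weak_le_def by (meson subset_antisym)
qed

end


context par begin

definition G :: "(nat \<times> nat) set \<Rightarrow> (nat \<times> nat) set" where
  "G T = {(i, k). (i, k) \<in> T \<and> (\<forall>j. i < j \<and> j < k \<and> \<not> same J i j \<and> \<not> same J j k \<longrightarrow> (i, j) \<in> T)}"

definition "pd w = permof n ((G (iv w))\<^sup>+)"

lemma G_sub: "G T \<subseteq> T" by (auto simp: G_def)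

lemma G_mono: "T \<subseteq> T' \<Longrightarrow> G T \<subseteq> G T'" by (auto simp: G_def)

lemma G_inner:
  assumes "(i, k) \<in> G T" "i < j" "j < k" "\<not> same J i j" "\<not> same J j k"
  shows "(i, j) \<in> G T"
proof -
  have "(i, j) \<in> T" using assms by (auto simp: G_def)
  moreover have "(i, j') \<in> T" if "i < j'" "j' < j" "\<not> same J i j'" "\<not> same J j' j" for j'
  proof -
    have "\<not> same J j' k" using same_split[of j' j k J] that assms by simp
    then show ?thesis using assms(1) that assms by (auto simp: G_def)
  qed
  ultimately show ?thesis by (auto simp: G_def)
qed

lemma cotrD: "cotr T \<Longrightarrow> (i, k) \<in> T \<Longrightarrow> i < j \<Longrightarrow> j < k \<Longrightarrow> (i, j) \<in> T \<or> (j, k) \<in> T"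
  unfolding cotr_def by blast

lemma P_cotr: "x \<in> P \<Longrightarrow> cotr (iv x)" using inv_bicl unfolding bicl_def by blast

lemma P_nsame: "x \<in> P \<Longrightarrow> (i, j) \<in> iv x \<Longrightarrow> \<not> same J i j"
  using P_D by (auto simp: Dif_def)

lemma G_base:
  assumes w: "w \<in> P" and ik: "(i, k) \<in> G (iv w)" and ij: "i < j" and jk: "j < k"
  shows "(i, j) \<in> (G (iv w))\<^sup>+ \<or> (j, k) \<in> (G (iv w))\<^sup>+"
proof -
  let ?T = "iv w"
  have ikT: "(i, k) \<in> ?T" using ik G_sub by blast
  consider "\<not> same J i j \<and> \<not> same J j k" | "same J i j" | "same J j k" by blast
  then show ?thesis
  proof cases
    case 1
    then show ?thesis using G_inner[OF ik ij jk] by blast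
  next
    case 2
    then have "(i, j) \<notin> ?T" using P_nsame[OF w] by blast
    then have jkT: "(j, k) \<in> ?T" using cotrD[OF P_cotr[OF w] ikT ij jk] by blast
    have "(j, j') \<in> ?T" if "j < j'" "j' < k" "\<not> same J j j'" "\<not> same J j' k" for j'
    proof (rule ccontr)
      assume nj: "(j, j') \<notin> ?T"
      have "\<not> same J i j'" using same_split[of i j j' J] that ij by simp
      then have "(i, j') \<in> ?T" using ik that ij by (auto simp: G_def)
      then show False using cotrD[OF P_cotr[OF w], of i j' j] ij that nj \<open>(i, j) \<notin> ?T\<close> by blast
    qed
    then have "(j, k) \<in> G ?T" using jkT by (auto simp: G_def)
    then show ?thesis by blast
  next
    case 3
    then have "(j, k) \<notin> ?T" using P_nsame[OF w] by blast
    then have ijT: "(i, j) \<in> ?T" using cotrD[OF P_cotr[OF w] ikT ij jk] by blast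
    have "(i, j') \<in> ?T" if "i < j'" "j' < j" "\<not> same J i j'" "\<not> same J j' j" for j'
    proof -
      have "\<not> same J j' k" using same_split[of j' j k J] that jk 3 by simp
      then show ?thesis using ik that jk by (auto simp: G_def)
    qed
    then have "(i, j) \<in> G ?T" using ijT by (auto simp: G_def)
    then show ?thesis by blast
  qed
qed

lemma pd_props:
  assumes w: "w \<in> P"
  shows "pd w \<in> P" "iv (pd w) = (G (iv w))\<^sup>+"
proof -
  have b: "bicl n ((G (iv w))\<^sup>+)"
  proof (rule tc_bicl)
    show "G (iv w) \<subseteq> up n" using G_sub inv_up by blast
  qed (rule G_base[OF w])
  have s: "(G (iv w))\<^sup>+ \<subseteq> iv w" by (rule tc_sub_trans[OF G_sub trans_inv])
  have d: "(G (iv w))\<^sup>+ \<subseteq> Dif J" using s P_D[OF w] by blast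
  show "pd w \<in> P" "iv (pd w) = (G (iv w))\<^sup>+" using P_of[OF b d] unfolding pd_def by auto
qed

lemma pd_le: "w \<in> P \<Longrightarrow> le (pd w) w"
  unfolding weak_le_def using pd_props tc_sub_trans[OF G_sub trans_inv] by simp

lemma pd_mono: "x \<in> P \<Longrightarrow> y \<in> P \<Longrightarrow> le x y \<Longrightarrow> le (pd x) (pd y)"
  unfolding weak_le_def using pd_props G_mono trancl_mono_subset by metis

lemma pd_idem: assumes w: "w \<in> P" shows "pd (pd w) = pd w"
proof -
  let ?T = "iv w"
  let ?U = "(G ?T)\<^sup>+"
  have U: "iv (pd w) = ?U" using pd_props[OF w] by simp
  have "G ?T \<subseteq> G ?U"
  proof
    fix x assume x: "x \<in> G ?T"
    then obtain i k where ik: "x = (i, k)" by (cases x)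
    have "(i, k) \<in> ?U" using x ik by auto
    moreover have "(i, j) \<in> ?U" if "i < j" "j < k" "\<not> same J i j" "\<not> same J j k" for j
      using G_inner[of i k ?T j] x ik that by auto
    ultimately show "x \<in> G ?U" using ik by (auto simp: G_def)
  qed
  then have "?U \<subseteq> (G ?U)\<^sup>+" by (rule trancl_mono_subset)
  moreover have "(G ?U)\<^sup>+ \<subseteq> ?U" by (rule tc_sub_trans[OF G_sub]) simp
  ultimately have e: "(G ?U)\<^sup>+ = ?U" by blast
  have "iv (pd (pd w)) = iv (pd w)" using pd_props[OF pd_props(1)[OF w]] U e by simp
  then show ?thesis using inv_inj P_perm pd_props w by metis
qed

end


context par begin

lemma iv_mem: "(i, k) \<in> iv w \<longleftrightarrow> 1 \<le> i \<and> i < k \<and> k \<le> n \<and> w i > w k"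
  by (simp add: inv_set_def)

lemma pd_join_core:
  assumes x: "x \<in> P" and z: "z \<in> P"
  shows "G (iv (jP x z)) \<subseteq> iv (jP (pd x) z)"
proof -
  let ?X = "iv x" and ?Z = "iv z" and ?y = "jP x z"
  let ?Y = "iv ?y" and ?W = "iv (jP (pd x) z)"
  have yP: "?y \<in> P" and Y: "?Y = (?X \<union> ?Z)\<^sup>+" using jP[OF x z] by auto
  have W: "?W = (iv (pd x) \<union> ?Z)\<^sup>+" using jP[OF pd_props(1)[OF x] z] by simp
  have pdx: "iv (pd x) = (G ?X)\<^sup>+" using pd_props[OF x] by simp
  have GXW: "G ?X \<subseteq> ?W" using W pdx by auto
  have ZW: "?Z \<subseteq> ?W" using W by auto
  have Wtr: "(a, b) \<in> ?W \<Longrightarrow> (b, c) \<in> ?W \<Longrightarrow> (a, c) \<in> ?W" for a b c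
    using W by (metis trancl_trans)
  have yperm: "?y \<in> perms n" using P_perm[OF yP] .
  have XZup: "?X \<union> ?Z \<subseteq> up n" using inv_up by blast
  have main: "\<And>i k. (i, k) \<in> G ?Y \<Longrightarrow> (i, k) \<in> ?W"
  proof -
    fix i k
    show "(i, k) \<in> G ?Y \<Longrightarrow> (i, k) \<in> ?W"
    proof (induction "k - i" arbitrary: i k rule: less_induct)
      case less
      have ikY: "(i, k) \<in> ?Y" using less.prems G_sub by blast
      then have ik: "1 \<le> i" "i < k" "k \<le> n" "?y i > ?y k" using iv_mem by auto
      have nsik: "\<not> same J i k" using P_nsame[OF yP ikY] .
      define S where "S = {j. i < j \<and> j < k \<and> \<not> same J i j \<and> \<not> same J j k} \<union> {k}"
      have Sfin: "finite S" unfolding S_def by (rule finite_UnI) (auto intro: finite_subset[of _ "{..<k}"])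
      have Sne: "S \<noteq> {}" unfolding S_def by simp
      have "Max (?y ` S) \<in> ?y ` S" using Sfin Sne by simp
      then obtain a where a: "a \<in> S" "?y a = Max (?y ` S)" by auto
      have amax: "\<And>j. j \<in> S \<Longrightarrow> ?y j \<le> ?y a" using a Sfin by simp
      show ?case
      proof (cases "a = k")
        case False
        then have aM: "i < a" "a < k" "\<not> same J i a" "\<not> same J a k" using a(1) by (auto simp: S_def)
        have iaG: "(i, a) \<in> G ?Y" using G_inner[OF less.prems aM] .
        have iaW: "(i, a) \<in> ?W" using less.hyps[OF _ iaG] aM by simp
        have "?y k \<le> ?y a" using amax by (simp add: S_def)
        moreover have "?y k \<noteq> ?y a" using perm_inj[OF yperm] False by metis
        ultimately have akY: "(a, k) \<in> ?Y" using iv_mem aM ik by auto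
        have "(a, j) \<in> ?Y" if j: "a < j" "j < k" "\<not> same J a j" "\<not> same J j k" for j
        proof -
          have "\<not> same J i j" using same_split[of i a j J] aM j by simp
          then have "j \<in> S" using aM j by (simp add: S_def)
          then have "?y j \<le> ?y a" by (rule amax)
          moreover have "?y j \<noteq> ?y a" using perm_inj[OF yperm] j by (metis less_irrefl)
          ultimately show ?thesis using iv_mem aM ik j by auto
        qed
        then have akG: "(a, k) \<in> G ?Y" using akY by (auto simp: G_def)
        have akW: "(a, k) \<in> ?W" using less.hyps[OF _ akG] aM by simp
        show ?thesis using Wtr[OF iaW akW] .
      next
        case True
        have noM: "(j, k) \<notin> ?Y" if j: "i < j" "j < k" "\<not> same J i j" "\<not> same J j k" for j
        proof
          assume "(j, k) \<in> ?Y"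
          then have "?y j > ?y k" using iv_mem by auto
          moreover have "j \<in> S" using j by (simp add: S_def)
          ultimately show False using amax True by fastforce
        qed
        have ikXZ: "(i, k) \<in> ?X \<union> ?Z"
        proof -
          have "(i, k) \<in> (?X \<union> ?Z)\<^sup>+" using ikY Y by simp
          then show ?thesis
          proof (rule converse_tranclE)
            assume "(i, k) \<in> ?X \<union> ?Z" then show ?thesis .
          next
            fix c assume step: "(i, c) \<in> ?X \<union> ?Z" "(c, k) \<in> (?X \<union> ?Z)\<^sup>+"
            have ic: "i < c" using step(1) XZup by (auto simp: up_def)
            have ck: "(c, k) \<in> ?Y" using step(2) Y by simp
            have "c < k" using ck iv_mem by auto
            moreover have "\<not> same J i c" using step(1) P_nsame[OF x] P_nsame[OF z] by blast
            moreover have "\<not> same J c k" using P_nsame[OF yP ck] .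
            ultimately show ?thesis using noM[of c] ic ck by blast
          qed
        qed
        show ?thesis
        proof (cases "(i, k) \<in> ?Z")
          case True then show ?thesis using ZW by blast
        next
          case False
          then have ikX: "(i, k) \<in> ?X" using ikXZ by blast
          define Q where "Q = {j. i < j \<and> j < k \<and> \<not> same J i j \<and> \<not> same J j k \<and> (i, j) \<notin> ?X}"
          show ?thesis
          proof (cases "Q = {}")
            case True
            then have "(i, k) \<in> G ?X" using ikX by (auto simp: G_def Q_def)
            then show ?thesis using GXW by blast
          next
            case False
            have Qfin: "finite Q" unfolding Q_def by (rule finite_subset[of _ "{..<k}"]) auto
            define j where "j = Max Q"
            have jQ: "j \<in> Q" using Qfin False j_def by simp
            have jmax: "\<And>j'. j' \<in> Q \<Longrightarrow> j' \<le> j" using Qfin j_def by simp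
            have jM: "i < j" "j < k" "\<not> same J i j" "\<not> same J j k" "(i, j) \<notin> ?X"
              using jQ by (auto simp: Q_def)
            have ijG: "(i, j) \<in> G ?Y" using G_inner[OF less.prems jM(1-4)] .
            have ijW: "(i, j) \<in> ?W" using less.hyps[OF _ ijG] jM by simp
            have jkX: "(j, k) \<in> ?X" using cotrD[OF P_cotr[OF x] ikX jM(1,2)] jM(5) by blast
            have "(j, j') \<in> ?X" if j': "j < j'" "j' < k" "\<not> same J j j'" "\<not> same J j' k" for j'
            proof (rule ccontr)
              assume nj: "(j, j') \<notin> ?X"
              have "\<not> same J i j'" using same_split[of i j j' J] jM j' by simp
              moreover have "j' \<notin> Q" using jmax j' by fastforce
              ultimately have "(i, j') \<in> ?X" using jM j' by (auto simp: Q_def)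
              then show False using cotrD[OF P_cotr[OF x], of i j' j] jM j' nj by blast
            qed
            then have "(j, k) \<in> G ?X" using jkX by (auto simp: G_def)
            then have jkW: "(j, k) \<in> ?W" using GXW by blast
            show ?thesis using Wtr[OF ijW jkW] .
          qed
        qed
      qed
    qed
  qed
  show ?thesis using main by auto
qed

lemma pd_join:
  assumes x: "x \<in> P" and z: "z \<in> P"
  shows "le (pd (join_on P le x z)) (join_on P le (pd x) z)"
proof -
  have e1: "join_on P le x z = jP x z" using join_on_P[OF x z] .
  have e2: "join_on P le (pd x) z = jP (pd x) z" using join_on_P[OF pd_props(1)[OF x] z] .
  have "iv (pd (jP x z)) = (G (iv (jP x z)))\<^sup>+" using pd_props[OF jP(1)[OF x z]] by simp
  also have "\<dots> \<subseteq> iv (jP (pd x) z)"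
    by (rule tc_sub_trans[OF pd_join_core[OF x z] trans_inv])
  finally show ?thesis using e1 e2 by (simp add: weak_le_def)
qed

end


lemma disc_ivt:
  fixes a b :: nat
  assumes "Q a" "\<not> Q b" "a \<le> b"
  shows "\<exists>v. a \<le> v \<and> v < b \<and> Q v \<and> \<not> Q (Suc v)"
  using assms
proof (induction b)
  case 0 then show ?case by simp
next
  case (Suc b)
  have ab: "a \<le> b" using Suc.prems by (metis le_SucE)
  show ?case
  proof (cases "Q b")
    case True then show ?thesis using ab Suc.prems by auto
  next
    case False
    then obtain v where "a \<le> v \<and> v < b \<and> Q v \<and> \<not> Q (Suc v)" using Suc.IH Suc.prems ab by blast
    then show ?thesis by (intro exI[of _ v]) simp
  qed
qed

context par begin

lemma fix_iff:
  assumes w: "w \<in> P"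
  shows "pd w = w \<longleftrightarrow> \<not> has_J231 n J w"
proof -
  let ?T = "iv w"
  have wp: "w \<in> perms n" using P_perm[OF w] .
  have sub: "(G ?T)\<^sup>+ \<subseteq> ?T" by (rule tc_sub_trans[OF G_sub trans_inv])
  have eq: "pd w = w \<longleftrightarrow> (G ?T)\<^sup>+ = ?T"
    using pd_props[OF w] inv_inj[OF P_perm[OF pd_props(1)[OF w]] wp] by metis
  have wr: "\<And>i. i \<in> {1..n} \<Longrightarrow> w i \<in> {1..n}" using perm_range[OF wp] by blast
  show ?thesis
  proof
    assume "pd w = w"
    then have TT: "(G ?T)\<^sup>+ = ?T" using eq by simp
    show "\<not> has_J231 n J w"
    proof
      assume "has_J231 n J w"
      then obtain i j k where h: "1 \<le> i" "i < j" "j < k" "k \<le> n"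
        "\<not> same J i j" "\<not> same J j k" "\<not> same J i k" "w k < w i" "w i < w j" "w i = w k + 1"
        unfolding has_J231_def by blast
      have "(i, k) \<in> ?T" using h iv_mem by auto
      then have "(i, k) \<in> (G ?T)\<^sup>+" using TT by simp
      then show False
      proof (rule converse_tranclE)
        assume "(i, k) \<in> G ?T"
        then have "(i, j) \<in> ?T" using h by (auto simp: G_def)
        then show False using h iv_mem by auto
      next
        fix c assume c: "(i, c) \<in> G ?T" "(c, k) \<in> (G ?T)\<^sup>+"
        have "(i, c) \<in> ?T" using c(1) G_sub by blast
        moreover have "(c, k) \<in> ?T" using c(2) sub by blast
        ultimately show False using h iv_mem by auto
      qed
    qed
  next
    assume nh: "\<not> has_J231 n J w"
    have "\<And>i k. (i, k) \<in> ?T \<Longrightarrow> (i, k) \<in> (G ?T)\<^sup>+"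
    proof -
      fix i k
      show "(i, k) \<in> ?T \<Longrightarrow> (i, k) \<in> (G ?T)\<^sup>+"
      proof (induction "k - i" arbitrary: i k rule: less_induct)
        case less
        have ik: "1 \<le> i" "i < k" "k \<le> n" "w i > w k" using less.prems iv_mem by auto
        show ?case
        proof (cases "(i, k) \<in> G ?T")
          case True then show ?thesis by blast
        next
          case False
          then obtain j where j: "i < j" "j < k" "\<not> same J i j" "\<not> same J j k" "(i, j) \<notin> ?T"
            using less.prems by (auto simp: G_def)
          have "w j \<noteq> w i" using perm_inj[OF wp] j by (metis less_irrefl)
          then have wji: "w j > w i" using j ik iv_mem by auto
          show ?thesis
          proof (cases "\<exists>a. i < a \<and> a < k \<and> w k < w a \<and> w a < w i")
            case True
            then obtain a where a: "i < a" "a < k" "w k < w a" "w a < w i" by blast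
            have "(i, a) \<in> ?T" "(a, k) \<in> ?T" using a ik iv_mem by auto
            then have "(i, a) \<in> (G ?T)\<^sup>+" "(a, k) \<in> (G ?T)\<^sup>+" using less.hyps a by auto
            then show ?thesis by (rule trancl_trans)
          next
            case False
            note nob = False
            define pos where "pos = inv w"
            have wpos: "\<And>v. w (pos v) = v" unfolding pos_def
              using wp unfolding perms_def by (simp add: permutes_inverses(1))
            have posw: "\<And>p. pos (w p) = p" unfolding pos_def
              using wp unfolding perms_def by (simp add: permutes_inverses(2))
            have posr: "\<And>v. v \<in> {1..n} \<Longrightarrow> pos v \<in> {1..n}"
            proof -
              fix v assume v: "v \<in> {1..n}"
              have "w (pos v) \<in> {1..n}" using v wpos by simp
              then show "pos v \<in> {1..n}"
                using wp permutes_in_image[of w "{1..n}" "pos v"] unfolding perms_def by simp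
            qed
            have "\<exists>v. w k \<le> v \<and> v < w i \<and> k \<le> pos v \<and> \<not> k \<le> pos (Suc v)"
              by (rule disc_ivt) (use posw ik in auto)
            then obtain v where v: "w k \<le> v" "v < w i" "k \<le> pos v" "pos (Suc v) < k" by auto
            have wi: "w i \<in> {1..n}" "w k \<in> {1..n}" using wr ik by auto
            have vr: "v \<in> {1..n}" "Suc v \<in> {1..n}" using v wi by auto
            define p where "p = pos v"
            define q where "q = pos (Suc v)"
            have pr: "p \<in> {1..n}" "q \<in> {1..n}" using posr vr p_def q_def by auto
            have wp': "w p = v" "w q = Suc v" using wpos p_def q_def by auto
            have qi: "q \<le> i"
            proof (cases "Suc v = w i")
              case True then show ?thesis using posw q_def by (metis le_refl)
            next
              case False
              show ?thesis
              proof (rule ccontr)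
                assume "\<not> q \<le> i"
                then have "i < q" "q < k" "w k < w q" "w q < w i" using v q_def wp' False by auto
                then show False using nob by blast
              qed
            qed
            have kp: "k \<le> p" using v p_def by simp
            have s1: "\<not> same J q j" using same_split[of q i j J] qi j by simp
            have s2: "\<not> same J j p" using same_split[of j k p J] kp j by simp
            have s3: "\<not> same J q p" using same_split[of q j p J] s1 qi kp j by simp
            have "has_J231 n J w" unfolding has_J231_def
              by (rule exI[of _ q], rule exI[of _ j], rule exI[of _ p])
                 (use pr qi kp j s1 s2 s3 wp' wji v in auto)
            then show ?thesis using nh by simp
          qed
        qed
      qed
    qed
    then have "?T \<subseteq> (G ?T)\<^sup>+" by auto
    then show "pd w = w" using eq sub by blast
  qed
qed

lemma avoid_eq: "avoid231 n J = {w \<in> P. pd w = w}"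
  unfolding avoid231_def using fix_iff by auto

lemma final:
  "is_lattice_on P le \<and> is_lattice_on (avoid231 n J) le
   \<and> (\<exists>\<Theta>. lattice_congruence P le \<Theta> \<and> quotient_iso P le \<Theta> (avoid231 n J) le)"
proof -
  interpret q: qctx P le pd
  proof
    show "is_lattice_on P le" by (rule P_lattice)
  qed (auto intro: pd_props(1) pd_le pd_mono pd_idem pd_join)
  show ?thesis using q.main P_lattice avoid_eq by simp
qed

end

theorem theorem1p1:
  fixes n :: nat and J :: "nat set"
  assumes "n > 0" and "J \<subseteq> {1..<n}"
  shows "is_lattice_on (parabolic n J) (weak_le n)
       \<and> is_lattice_on (avoid231 n J) (weak_le n)
       \<and> (\<exists>\<Theta>. lattice_congruence (parabolic n J) (weak_le n) \<Theta>
              \<and> quotient_iso (parabolic n J) (weak_le n) \<Theta> (avoid231 n J) (weak_le n))"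
proof -
  interpret par n J using assms(2) by unfold_locales
  show ?thesis by (rule final)
qed


end
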